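(* Let $n\ge 1$, let $K,T\in\mathcal S_n\setminus\{\emptyset,\mathbb R^n\}$ and let $\lambda\in(0,1)$. Then $(1-\lambda)K+\lambda T\in\mathcal S_n$ and \[ \big((1-\lambda)K+\lambda T\big)^c=(1-\lambda)K^c+\lambda T^c, \] where $+$ denotes Minkowski addition.
   Context: $B(x,r)=\{y\in\mathbb R^n:\|y-x\|_2\le r\}$ is the closed Euclidean ball. For $A\subseteq\mathbb R^n$, its $c$-dual is $A^c=\{y:\|x-y\|_2\le 1\ \forall x\in A\}=\bigcap_{x\in A}B(x,1)$ (with $\emptyset^c=\mathbb R^n$). $\mathcal S_n$ (ball-bodies) is the class of all sets of the form $\bigcap_{x\in A}B(x,1)$ for some $A\subseteq\mathbb R^n$, i.e. the image of the map $A\mapsto A^c$; it contains $\emptyset$ and $\mathbb R^n$. *)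

theory Defs
  imports "HOL-Analysis.Analysis"
begin

definition cdual :: "'a::euclidean_space set \<Rightarrow> 'a set" where
  "cdual A = {y. \<forall>x\<in>A. dist x y \<le> 1}"

definition ball_bodies :: "'a::euclidean_space set set" where
  "ball_bodies = range cdual"

definition mink_sum :: "'a::real_vector set \<Rightarrow> 'a set \<Rightarrow> 'a set" where
  "mink_sum A B = {a + b | a b. a \<in> A \<and> b \<in> B}"

definition scale_set :: "real \<Rightarrow> 'a::real_vector set \<Rightarrow> 'a set" where
  "scale_set c A = (\<lambda>x. c *\<^sub>R x) ` A"

end

theory Submission
  imports Defs
begin

lemma cdual_INT: "cdual A = (\<Inter>a\<in>A. cball a 1)"
  by (auto simp: cdual_def cball_def)

lemma cdual_convex: "convex (cdual A)"
  unfolding cdual_INT by (intro convex_INT convex_cball)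

lemma cdual_closed: "closed (cdual A)"
  unfolding cdual_INT by (intro closed_INT ballI closed_cball)

lemma cdual_compact: assumes "A \<noteq> {}" shows "compact (cdual A)"
proof -
  obtain a where a: "a \<in> A" using assms by blast
  have "cdual A \<subseteq> cball a 1" using a by (auto simp: cdual_def cball_def)
  then have "bounded (cdual A)" using bounded_subset bounded_cball by blast
  then show ?thesis using cdual_closed compact_eq_bounded_closed by blast
qed

lemma cdual_anti: "A \<subseteq> B \<Longrightarrow> cdual B \<subseteq> cdual A"
  by (auto simp: cdual_def)

lemma cdual_sub: "A \<subseteq> cdual (cdual A)"
  by (auto simp: cdual_def dist_commute)

lemma cdual3: "cdual (cdual (cdual A)) = cdual A"
  by (meson cdual_anti cdual_sub subset_antisym)

lemma bb_dd: "K \<in> ball_bodies \<Longrightarrow> cdual (cdual K) = K"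
  unfolding ball_bodies_def using cdual3 by auto

lemma bb_dual_ne: assumes "K \<in> ball_bodies" "K \<noteq> UNIV" shows "cdual K \<noteq> {}"
proof -
  obtain A where A: "K = cdual A" using assms(1) unfolding ball_bodies_def by blast
  have "A \<noteq> {}" using A assms(2) by (auto simp: cdual_def)
  moreover have "A \<subseteq> cdual K" using A cdual_sub by blast
  ultimately show ?thesis by blast
qed

lemma inner_conv2: fixes e f :: "'a::real_inner" shows
 "inner ((1-t) *\<^sub>R e + t *\<^sub>R f) ((1-t) *\<^sub>R e + t *\<^sub>R f) = (1-t)^2 * inner e e + 2*t*(1-t)*inner e f + t^2 * inner f f"
  by (simp add: inner_add_left inner_add_right inner_commute[of f e] power2_eq_square ring_distribs)

lemma inner_diff2: fixes e f :: "'a::real_inner" shows "inner (f - e) (f-e) = inner f f - 2 * inner e f + inner e e"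
  by (simp add: inner_diff_left inner_diff_right inner_commute[of f e])

lemma inner_diff_sc: fixes P u :: "'a::real_inner" shows "inner (P - c *\<^sub>R u) (P - c *\<^sub>R u) = inner P P - 2*c*inner u P + c^2 * inner u u"
  by (simp add: inner_diff_left inner_diff_right inner_commute[of P u] power2_eq_square right_diff_distrib)

lemma SB:
  fixes u y :: "'a::euclidean_space"
  assumes C: "C = cdual A" and u: "norm u = 1" and y: "y \<in> C"
    and mn: "\<forall>x\<in>C. inner u y \<le> inner u x"
  shows "y + u \<in> cdual C"
  unfolding cdual_def
proof (clarify, rule ccontr)
  fix x assume x: "x \<in> C" and nd: "\<not> dist x (y+u) \<le> 1"
  define d where "d = x - y"
  define Dv where "Dv = inner d d"
  define w where "w = inner u d"
  have uu: "inner u u = 1" using u by (simp add: dot_square_norm)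
  have v0: "w \<ge> 0" using mn x by (simp add: w_def d_def inner_diff_right)
  have n1: "1 < dist x (y+u)" using nd by simp
  have "1 < (dist x (y+u))^2" using n1 by (simp add: power_less_one_iff one_less_power)
  also have "(dist x (y+u))^2 = Dv - 2* w + 1"
  proof -
    have "dist x (y+u) = norm (d - u)" by (simp add: dist_norm d_def algebra_simps)
    then have "(dist x (y+u))^2 = inner (d-u) (d-u)" by (simp add: dot_square_norm)
    also have "\<dots> = Dv - 2* w + 1" using uu
      by (simp add: Dv_def w_def inner_diff_left inner_diff_right inner_commute)
    finally show ?thesis .
  qed
  finally have vD: "w < Dv/2" by simp
  define sv where "sv = (Dv/2 + w)/2"
  define gv where "gv = Dv/2 - w"
  define t where "t = gv / (sv^2 + Dv + gv)"
  have g0: "gv > 0" using vD by (simp add: gv_def)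
  have D0: "Dv \<ge> 0" by (simp add: Dv_def)
  have s0: "sv \<ge> 0" using v0 D0 by (simp add: sv_def)
  have vs: "w < sv" using vD by (simp add: sv_def)
  have den: "sv^2 + Dv + gv > 0" using g0 D0 by (simp add: add_nonneg_pos)
  have t0: "t > 0" using g0 den by (simp add: t_def)
  have Dp: "Dv > 0" using vD v0 by simp
  have t1: "t < 1" using g0 den Dp by (simp add: t_def add_nonneg_pos)
  have teq: "t * (sv^2 + Dv + gv) = gv" using den by (simp add: t_def)
  have gD: "Dv - 2* sv = gv" unfolding gv_def sv_def by (simp add: field_simps)
  have key: "2*(t* sv) + (t* sv)^2 \<le> t*(1-t)*Dv"
  proof -
    have "t*(sv^2+Dv) = gv - t*gv" using teq by (simp add: algebra_simps)
    moreover have "0 < t*gv" using t0 g0 by simp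
    ultimately have "t*(sv^2+Dv) \<le> gv" by linarith
    then have "2* sv + t* sv^2 \<le> Dv - t*Dv" using gD by (simp add: algebra_simps)
    then have "t*(2* sv + t* sv^2) \<le> t*(Dv - t*Dv)" using t0 by (simp add: mult_left_mono)
    then show ?thesis by (simp add: algebra_simps power2_eq_square)
  qed
  define z where "z = y + t *\<^sub>R d - (t* sv) *\<^sub>R u"
  have zC: "z \<in> C"
    unfolding C cdual_def
  proof (clarify)
    fix a assume a: "a \<in> A"
    have ya: "dist a y \<le> 1" using y a by (auto simp: C cdual_def)
    have xa: "dist a x \<le> 1" using x a by (auto simp: C cdual_def)
    define e where "e = y - a"
    define f where "f = x - a"
    define P where "P = (1-t) *\<^sub>R e + t *\<^sub>R f"
    have ee: "inner e e \<le> 1"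
    proof -
      have "norm e \<le> 1" using ya by (simp add: e_def dist_norm norm_minus_commute)
      then have "(norm e)^2 \<le> 1" by (simp add: power_le_one)
      then show ?thesis by (simp add: dot_square_norm)
    qed
    have ff: "inner f f \<le> 1"
    proof -
      have "norm f \<le> 1" using xa by (simp add: f_def dist_norm norm_minus_commute)
      then have "(norm f)^2 \<le> 1" by (simp add: power_le_one)
      then show ?thesis by (simp add: dot_square_norm)
    qed
    have nP: "norm P \<le> 1"
    proof -
      have "norm P \<le> norm ((1-t) *\<^sub>R e) + norm (t *\<^sub>R f)" unfolding P_def by (rule norm_triangle_ineq)
      also have "\<dots> = (1-t) * norm e + t * norm f" using t0 t1 by simp
      also have "\<dots> \<le> (1-t) * 1 + t * 1"
        using ya xa t0 t1
        by (intro add_mono mult_left_mono) (auto simp: e_def f_def dist_norm norm_minus_commute)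
      finally show ?thesis by simp
    qed
    have dfe: "d = f - e" by (simp add: d_def e_def f_def)
    have PP: "inner P P = (1-t) * inner e e + t * inner f f - t*(1-t)*Dv"
      unfolding P_def Dv_def dfe inner_conv2 inner_diff2
      by (simp add: algebra_simps power2_eq_square)
    have za: "z - a = P - (t* sv) *\<^sub>R u"
      by (simp add: z_def P_def e_def f_def d_def algebra_simps)
    have uP: "\<bar>inner u P\<bar> \<le> 1"
      using Cauchy_Schwarz_ineq2[of u P] u nP by simp
    have "inner (z-a) (z-a) = inner P P - 2*(t* sv)*inner u P + (t* sv)^2"
      unfolding za inner_diff_sc using uu by simp
    also have "\<dots> \<le> inner P P + 2*(t* sv) + (t* sv)^2"
    proof -
      have "- (2*(t* sv)*inner u P) \<le> 2*(t* sv)"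
      proof -
        have c0: "0 \<le> 2*(t* sv)" using t0 s0 by simp
        have "- (2*(t* sv)*inner u P) = 2*(t* sv) * (- inner u P)" by simp
        also have "\<dots> \<le> 2*(t* sv) * \<bar>inner u P\<bar>" using c0 by (intro mult_left_mono) auto
        also have "\<dots> \<le> 2*(t* sv) * 1" using c0 uP by (intro mult_left_mono) auto
        finally show ?thesis by simp
      qed
      then show ?thesis by simp
    qed
    also have "\<dots> \<le> (1-t) * 1 + t * 1 - t*(1-t)*Dv + 2*(t* sv) + (t* sv)^2"
    proof -
      have "(1-t) * inner e e \<le> (1-t) * 1" using ee t1 by (intro mult_left_mono) auto
      moreover have "t * inner f f \<le> t * 1" using ff t0 by (intro mult_left_mono) auto
      ultimately show ?thesis unfolding PP by linarith
    qed
    also have "\<dots> \<le> 1" using key by simp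
    finally have "inner (z-a) (z-a) \<le> 1" .
    then have "(norm (z-a))^2 \<le> 1" by (simp add: dot_square_norm)
    then have "norm (z-a) \<le> 1" by (simp add: power_le_one_iff)
    then show "dist a z \<le> 1" by (simp add: dist_norm norm_minus_commute)
  qed
  have "inner u z = inner u y + t* w - t* sv"
    using uu by (simp add: z_def w_def inner_add_right inner_diff_right)
  moreover have "t* w < t* sv" using vs t0 by simp
  ultimately have "inner u z < inner u y" by simp
  then show False using mn zC by auto
qed


lemma mink_eq: "mink_sum A B = (\<Union>x\<in>A. \<Union>y\<in>B. {x + y})"
  by (auto simp: mink_sum_def)

lemma mink_convex: "convex A \<Longrightarrow> convex B \<Longrightarrow> convex (mink_sum (scale_set a A) (scale_set b B))"
  unfolding mink_eq scale_set_def by (intro convex_sums convex_scaling)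

lemma mink_compact: fixes A B :: "'a::euclidean_space set" assumes "compact A" "compact B" shows "compact (mink_sum (scale_set a A) (scale_set b B))"
  unfolding mink_sum_def scale_set_def
  using compact_sums[OF compact_scaling[OF assms(1)] compact_scaling[OF assms(2)]] by simp

lemma mink_mem: "x \<in> A \<Longrightarrow> y \<in> B \<Longrightarrow> a *\<^sub>R x + b *\<^sub>R y \<in> mink_sum (scale_set a A) (scale_set b B)"
  by (auto simp: mink_sum_def scale_set_def)

lemma mink_memE: "z \<in> mink_sum (scale_set a A) (scale_set b B) \<Longrightarrow> \<exists>x\<in>A. \<exists>y\<in>B. z = a *\<^sub>R x + b *\<^sub>R y"
  by (auto simp: mink_sum_def scale_set_def)

lemma easy_incl:
  fixes K T :: "'a::euclidean_space set"
  assumes "0 \<le> lam" "lam \<le> 1"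
  shows "mink_sum (scale_set (1 - lam) (cdual K)) (scale_set lam (cdual T))
     \<subseteq> cdual (mink_sum (scale_set (1 - lam) K) (scale_set lam T))"
proof
  fix y assume "y \<in> mink_sum (scale_set (1 - lam) (cdual K)) (scale_set lam (cdual T))"
  then obtain a b where a: "a \<in> cdual K" and b: "b \<in> cdual T" and y: "y = (1-lam) *\<^sub>R a + lam *\<^sub>R b"
    using mink_memE by blast
  show "y \<in> cdual (mink_sum (scale_set (1 - lam) K) (scale_set lam T))"
    unfolding cdual_def
  proof clarify
    fix x assume "x \<in> mink_sum (scale_set (1 - lam) K) (scale_set lam T)"
    then obtain k t where k: "k \<in> K" and t: "t \<in> T" and x: "x = (1-lam) *\<^sub>R k + lam *\<^sub>R t"
      using mink_memE by blast
    have dk: "norm (k - a) \<le> 1" using a k by (auto simp: cdual_def dist_norm)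
    have dt: "norm (t - b) \<le> 1" using b t by (auto simp: cdual_def dist_norm)
    have "x - y = (1-lam) *\<^sub>R (k - a) + lam *\<^sub>R (t - b)"
      by (simp add: x y algebra_simps)
    then have "norm (x - y) \<le> norm ((1-lam) *\<^sub>R (k - a)) + norm (lam *\<^sub>R (t - b))"
      by (metis norm_triangle_ineq)
    also have "\<dots> = (1-lam) * norm (k - a) + lam * norm (t - b)" using assms by simp
    also have "\<dots> \<le> (1-lam) * 1 + lam * 1"
      using assms dk dt by (intro add_mono mult_left_mono) auto
    finally show "dist x y \<le> 1" by (simp add: dist_norm)
  qed
qed

lemma hard_incl:
  fixes K T :: "'a::euclidean_space set"
  assumes K: "K \<in> ball_bodies" "K \<noteq> {}" "cdual K \<noteq> {}"
    and T: "T \<in> ball_bodies" "T \<noteq> {}" "cdual T \<noteq> {}"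
    and lam: "0 \<le> lam" "lam \<le> 1"
  shows "cdual (mink_sum (scale_set (1 - lam) K) (scale_set lam T))
     \<subseteq> mink_sum (scale_set (1 - lam) (cdual K)) (scale_set lam (cdual T))"
    (is "cdual ?M \<subseteq> ?N")
proof
  fix z assume z: "z \<in> cdual ?M"
  show "z \<in> ?N"
  proof (rule ccontr)
    assume zN: "z \<notin> ?N"
    have cK: "compact (cdual K)" using K cdual_compact by blast
    have cT: "compact (cdual T)" using T cdual_compact by blast
    have "convex ?N" by (intro mink_convex cdual_convex)
    moreover have "closed ?N" using mink_compact[OF cK cT] compact_imp_closed by blast
    ultimately obtain a b where ab: "inner a z < b" "\<forall>x\<in>?N. b < inner a x"
      using separating_hyperplane_closed_point zN by blast
    define u where "u = a /\<^sub>R norm a"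
    have cont: "continuous_on S (inner u)" for S
      by (intro continuous_intros)
    obtain y1 where y1: "y1 \<in> cdual K" "\<forall>y\<in>cdual K. inner u y1 \<le> inner u y"
      using continuous_attains_inf[OF cK K(3) cont] by blast
    obtain y2 where y2: "y2 \<in> cdual T" "\<forall>y\<in>cdual T. inner u y2 \<le> inner u y"
      using continuous_attains_inf[OF cT T(3) cont] by blast
    define n0 where "n0 = (1-lam) *\<^sub>R y1 + lam *\<^sub>R y2"
    have n0N: "n0 \<in> ?N" unfolding n0_def by (intro mink_mem y1 y2)
    have "a \<noteq> 0" using ab n0N by fastforce
    then have na: "norm a > 0" by simp
    have nu: "norm u = 1" using na by (simp add: u_def)
    have uu: "inner u u = 1" using nu by (simp add: dot_square_norm)
    have "inner a z < inner a n0" using ab n0N by fastforce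
    then have zn: "inner u z < inner u n0" using na by (simp add: u_def divide_strict_right_mono)
    have k: "y1 + u \<in> K"
      using SB[OF refl nu y1(1) y1(2)] bb_dd[OF K(1)] by simp
    have t: "y2 + u \<in> T"
      using SB[OF refl nu y2(1) y2(2)] bb_dd[OF T(1)] by simp
    define m where "m = (1-lam) *\<^sub>R (y1 + u) + lam *\<^sub>R (y2 + u)"
    have mM: "m \<in> ?M" unfolding m_def by (intro mink_mem k t)
    have mn: "m = n0 + u" by (simp add: m_def n0_def algebra_simps)
    have "dist m z \<le> 1" using z mM by (auto simp: cdual_def)
    moreover have "inner u (m - z) \<le> norm (m - z)"
      using Cauchy_Schwarz_ineq2[of u "m - z"] nu by simp
    moreover have "inner u (m - z) = inner u n0 + 1 - inner u z"
      using uu by (simp add: mn inner_diff_right inner_add_right)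
    ultimately show False using zn by (simp add: dist_norm)
  qed
qed

theorem theorem1p19:
  fixes K T :: "'a::euclidean_space set" and lam :: real
  assumes "K \<in> ball_bodies" "K \<noteq> {}" "K \<noteq> UNIV"
    and "T \<in> ball_bodies" "T \<noteq> {}" "T \<noteq> UNIV"
    and "0 < lam" "lam < 1"
  shows "mink_sum (scale_set (1 - lam) K) (scale_set lam T) \<in> ball_bodies
    \<and> cdual (mink_sum (scale_set (1 - lam) K) (scale_set lam T))
        = mink_sum (scale_set (1 - lam) (cdual K)) (scale_set lam (cdual T))"
proof -
  have l0: "0 \<le> lam" "lam \<le> 1" using assms by auto
  have dK: "cdual K \<noteq> {}" using bb_dual_ne assms by blast
  have dT: "cdual T \<noteq> {}" using bb_dual_ne assms by blast
  have bK: "cdual K \<in> ball_bodies" by (simp add: ball_bodies_def)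
  have bT: "cdual T \<in> ball_bodies" by (simp add: ball_bodies_def)
  have ddK: "cdual (cdual K) \<noteq> {}" using bb_dd[OF assms(1)] assms(2) by simp
  have ddT: "cdual (cdual T) \<noteq> {}" using bb_dd[OF assms(4)] assms(5) by simp
  have eq: "cdual (mink_sum (scale_set (1 - lam) K) (scale_set lam T))
        = mink_sum (scale_set (1 - lam) (cdual K)) (scale_set lam (cdual T))"
    using hard_incl[OF assms(1,2) dK assms(4,5) dT l0] easy_incl[OF l0] by blast
  have h2: "cdual (mink_sum (scale_set (1 - lam) (cdual K)) (scale_set lam (cdual T)))
     \<subseteq> mink_sum (scale_set (1 - lam) K) (scale_set lam T)"
    using hard_incl[OF bK dK ddK bT dT ddT l0] bb_dd[OF assms(1)] bb_dd[OF assms(4)] by simp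
  have h1: "mink_sum (scale_set (1 - lam) K) (scale_set lam T)
      \<subseteq> cdual (mink_sum (scale_set (1 - lam) (cdual K)) (scale_set lam (cdual T)))"
    using cdual_sub[of "mink_sum (scale_set (1 - lam) K) (scale_set lam T)"] eq by simp
  have "mink_sum (scale_set (1 - lam) K) (scale_set lam T)
      = cdual (mink_sum (scale_set (1 - lam) (cdual K)) (scale_set lam (cdual T)))"
    using h1 h2 by (rule subset_antisym)
  then have "mink_sum (scale_set (1 - lam) K) (scale_set lam T) \<in> ball_bodies"
    unfolding ball_bodies_def by (metis rangeI)
  then show ?thesis using eq by blast
qed

end
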